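(* Let $\mu=\alpha_-\delta_{-\infty}+\alpha_0\mu_0+\alpha_+\delta_{+\infty}\in\mathcal{P}(\overline{\mathbb{Z}})$ with $\alpha_\sigma\ge0$ summing to $1$, $\mu_0\in\mathcal{P}(\mathbb{Z})$ and $\alpha_0\ne0$. Let $0<\varepsilon<\alpha_0/2$, $R\in\mathbb{N}$ with $R>\max\{R_{\overline{\mathbb{Z}}}(\varepsilon),R_{\mu_0}(\varepsilon)\}$, $n\in\mathbb{N}$ and $w\in\Omega^{(0)}_n(\mu,2^{-R}\varepsilon)$. Then $\ell^0(w)$ is well defined and $$\|\ell^0(w)-\mu_0\|<\frac{6\varepsilon}{\alpha_0}.$$
   Context: $\overline{\mathbb{Z}}=\mathbb{Z}\cup\{\pm\infty\}$ with metric $d(h,k)=|\varphi(h)-\varphi(k)|$, $\varphi(\pm\infty)=\pm1$, $\varphi(k)=1-2^{-k}$ ($k\ge0$), $\varphi(k)=-1+2^{-|k|}$ ($k<0$). For signed measures, $\|\nu\|=\sup\{\int f\,d\nu: f\text{ 1-Lipschitz for }d,\ \sup|f|\le1\}$; $B(\mu,\varepsilon)=\{\nu\in\mathcal{P}(\overline{\mathbb{Z}}):\|\nu-\mu\|<\varepsilon\}$. $\Omega^{(0)}_n$: words $w=(w_1,\dots,w_n)\in\mathbb{Z}^n$, $w_1=0$, $|w_i-w_{i+1}|=1$; $\ell(w)=\frac1n\sum_j\delta_{w_j}$; $\Omega^{(0)}_n(\mu,\varepsilon)=\{w\in\Omega^{(0)}_n:\ell(w)\in B(\mu,\varepsilon)\}$.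 With $A^0=\{-R+1,\dots,R-1\}$, $N^0(w)=\#\{j\le n:w_j\in A^0\}$ and, when $N^0(w)\neq0$, $\ell^0(w)=\frac1{N^0(w)}\sum_{j\le n:\,w_j\in A^0}\delta_{w_j}$. $R_{\overline{\mathbb{Z}}}(\varepsilon)=\lceil\log_2(1/\varepsilon)\rceil+1$ and $R_{\mu_0}(\varepsilon)=\min\{R\in\mathbb{N}:\mu_0(\{-R+1,\dots,R-1\})>1-\varepsilon\}$. *)

theory Defs
  imports "HOL-Analysis.Analysis"
begin

datatype zbar = NegInf | Fin int | PosInf

fun phi :: "zbar \<Rightarrow> real" where
  "phi NegInf = -1"
| "phi PosInf = 1"
| "phi (Fin k) = (if k \<ge> 0 then 1 - 2 powr (- real_of_int k) else -1 + 2 powr (- real_of_int \<bar>k\<bar>))"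

definition dZ :: "zbar \<Rightarrow> zbar \<Rightarrow> real" where
  "dZ h k = \<bar>phi h - phi k\<bar>"

text \<open>Since the space is countable (with discrete Borel sigma-algebra), finite (signed)
  measures are represented by their point-mass functions.\<close>
definition is_prob :: "(zbar \<Rightarrow> real) \<Rightarrow> bool" where
  "is_prob p \<longleftrightarrow> (\<forall>x. p x \<ge> 0) \<and> (p has_sum 1) UNIV"

definition is_prob_Z :: "(int \<Rightarrow> real) \<Rightarrow> bool" where
  "is_prob_Z p \<longleftrightarrow> (\<forall>x. p x \<ge> 0) \<and> (p has_sum 1) UNIV"

definition knorm :: "(zbar \<Rightarrow> real) \<Rightarrow> real" where
  "knorm \<nu> = Sup {(\<Sum>\<^sub>\<infinity>x. f x * \<nu> x) | f.
      (\<forall>h k. \<bar>f h - f k\<bar> \<le> dZ h k) \<and> (\<forall>x. \<bar>f x\<bar> \<le> 1)}"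

definition pball :: "(zbar \<Rightarrow> real) \<Rightarrow> real \<Rightarrow> (zbar \<Rightarrow> real) set" where
  "pball \<mu> e = {\<nu>. is_prob \<nu> \<and> knorm (\<lambda>x. \<nu> x - \<mu> x) < e}"

definition embZ :: "(int \<Rightarrow> real) \<Rightarrow> zbar \<Rightarrow> real" where
  "embZ p x = (case x of Fin k \<Rightarrow> p k | _ \<Rightarrow> 0)"

definition mix :: "real \<Rightarrow> real \<Rightarrow> real \<Rightarrow> (int \<Rightarrow> real) \<Rightarrow> zbar \<Rightarrow> real" where
  "mix am a0 ap mu0 x = (case x of NegInf \<Rightarrow> am | Fin k \<Rightarrow> a0 * mu0 k | PosInf \<Rightarrow> ap)"

text \<open>Words w = (w_1,...,w_n) are lists of length n; w_j is \<open>w ! (j-1)\<close>.\<close>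
definition Omega0 :: "nat \<Rightarrow> int list set" where
  "Omega0 n = {w. length w = n \<and> n \<ge> 1 \<and> w ! 0 = 0 \<and>
      (\<forall>i. i + 1 < n \<longrightarrow> \<bar>w ! i - w ! (i + 1)\<bar> = 1)}"

definition ell :: "int list \<Rightarrow> zbar \<Rightarrow> real" where
  "ell w x = (case x of Fin k \<Rightarrow> real (card {j. j < length w \<and> w ! j = k}) / real (length w)
                        | _ \<Rightarrow> 0)"

definition Omega0_ball :: "nat \<Rightarrow> (zbar \<Rightarrow> real) \<Rightarrow> real \<Rightarrow> int list set" where
  "Omega0_ball n \<mu> e = {w \<in> Omega0 n. ell w \<in> pball \<mu> e}"

definition A0 :: "nat \<Rightarrow> int set" where
  "A0 R = {- int R + 1 .. int R - 1}"

definition N0 :: "nat \<Rightarrow> int list \<Rightarrow> nat" where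
  "N0 R w = card {j. j < length w \<and> w ! j \<in> A0 R}"

definition ell0 :: "nat \<Rightarrow> int list \<Rightarrow> zbar \<Rightarrow> real" where
  "ell0 R w x = (case x of Fin k \<Rightarrow>
        (if k \<in> A0 R then real (card {j. j < length w \<and> w ! j = k}) / real (N0 R w) else 0)
      | _ \<Rightarrow> 0)"

definition R_Zbar :: "real \<Rightarrow> int" where
  "R_Zbar e = \<lceil>log 2 (1 / e)\<rceil> + 1"

definition R_mu0 :: "(int \<Rightarrow> real) \<Rightarrow> real \<Rightarrow> nat" where
  "R_mu0 mu0 e = (LEAST R::nat. (\<Sum>k\<in>A0 R. mu0 k) > 1 - e)"

end

theory Submission
  imports Defs
begin


lemma p2le1: "t \<le> 0 \<Longrightarrow> 2 powr t \<le> (1::real)"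
  using powr_mono[of t 0 "2::real"] by simp

lemma phi_Fin_mono: "i \<le> j \<Longrightarrow> phi (Fin i) \<le> phi (Fin j)"
proof -
  assume ij: "i \<le> j"
  show ?thesis
  proof (cases "0 \<le> i")
    case True
    then show ?thesis using ij by (simp add: powr_mono)
  next
    case False
    show ?thesis
    proof (cases "0 \<le> j")
      case True
      have "2 powr (- real_of_int \<bar>i\<bar>) \<le> 2 powr (-1)" using False by (intro powr_mono) auto
      moreover have "2 powr (- real_of_int j) \<le> 1" using True by (intro p2le1) simp
      ultimately show ?thesis using False True by (simp add: powr_minus)
    next
      case False2: False
      then show ?thesis using False ij by (simp add: powr_mono)
    qed
  qed
qed

lemma phi_bounds: "-1 \<le> phi x \<and> phi x \<le> 1"
proof (cases x)
  case (Fin k)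
  then show ?thesis using p2le1[of "- real_of_int k"] p2le1[of "real_of_int k"] by auto
qed auto

lemma gap: assumes "- int R \<le> i" "i \<le> int R - 1"
  shows "phi (Fin (i+1)) - phi (Fin i) \<ge> 2 powr (- real R)"
proof (cases "0 \<le> i")
  case True
  have "phi (Fin (i+1)) - phi (Fin i) = 2 powr (- real_of_int i) - 2 powr (- real_of_int i - 1)"
    using True by simp
  also have "\<dots> = 2 powr (- real_of_int i - 1)"
    by (simp add: powr_diff powr_minus field_simps)
  also have "\<dots> \<ge> 2 powr (- real R)" using assms by (intro powr_mono) auto
  finally show ?thesis .
next
  case False
  show ?thesis
  proof (cases "i = -1")
    case True
    have "2 powr (- real R) \<le> 2 powr (-1)" using assms True by (intro powr_mono) auto
    then show ?thesis using True by (simp add: powr_minus)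
  next
    case False2: False
    have "phi (Fin (i+1)) - phi (Fin i) = 2 powr (real_of_int i + 1) - 2 powr (real_of_int i)"
      using False False2 by (simp add: ac_simps)
    also have "\<dots> = 2 powr (real_of_int i)"
      by (simp add: powr_add)
    also have "\<dots> \<ge> 2 powr (- real R)" using assms by (intro powr_mono) auto
    finally show ?thesis .
  qed
qed

lemma gap_dZ: assumes "k \<in> A0 R" "x \<noteq> Fin k"
  shows "dZ (Fin k) x \<ge> 2 powr (- real R)"
proof -
  have k: "- int R + 1 \<le> k" "k \<le> int R - 1" using assms(1) by (auto simp: A0_def)
  have g1: "phi (Fin (k+1)) - phi (Fin k) \<ge> 2 powr (- real R)" using gap[of R k] k by auto
  have g2: "phi (Fin k) - phi (Fin (k-1)) \<ge> 2 powr (- real R)" using gap[of R "k-1"] k by auto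
  have dz: "dZ (Fin k) x = \<bar>phi (Fin k) - phi x\<bar>" by (simp only: dZ_def)
  show ?thesis
  proof (cases x)
    case NegInf
    then have "phi x = -1" by simp
    then show ?thesis using g2 phi_bounds[of "Fin (k-1)"] dz by linarith
  next
    case PosInf
    then have "phi x = 1" by simp
    then show ?thesis using g1 phi_bounds[of "Fin (k+1)"] dz by linarith
  next
    case (Fin j)
    then have "j \<ge> k + 1 \<or> j \<le> k - 1" using assms(2) by auto
    then show ?thesis
    proof
      assume "j \<ge> k+1"
      then have "phi (Fin j) \<ge> phi (Fin (k+1))" by (rule phi_Fin_mono)
      then show ?thesis using g1 dz unfolding Fin by linarith
    next
      assume "j \<le> k-1"
      then have "phi (Fin j) \<le> phi (Fin (k-1))" by (rule phi_Fin_mono)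
      then show ?thesis using g2 dz unfolding Fin by linarith
    qed
  qed
qed

lemma embZ_has_sum:
  assumes "(h has_sum s) UNIV"
  shows "((\<lambda>x. case x of Fin k \<Rightarrow> h k | _ \<Rightarrow> 0) has_sum s) UNIV"
proof -
  let ?g = "(\<lambda>x. case x of Fin k \<Rightarrow> h k | _ \<Rightarrow> 0)"
  have "(?g has_sum s) (range Fin)"
    using assms by (subst has_sum_reindex) (auto simp: o_def inj_on_def)
  moreover have "x \<notin> range Fin \<Longrightarrow> ?g x = 0" for x by (cases x) auto
  ultimately show ?thesis
    by (subst has_sum_cong_neutral[where T="range Fin" and g="?g"]) auto
qed

definition validf :: "(zbar \<Rightarrow> real) \<Rightarrow> bool" where
  "validf f \<longleftrightarrow> (\<forall>h k. \<bar>f h - f k\<bar> \<le> dZ h k) \<and> (\<forall>x. \<bar>f x\<bar> \<le> 1)"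

lemma knorm_alt: "knorm \<nu> = Sup {(\<Sum>\<^sub>\<infinity>x. f x * \<nu> x) | f. validf f}"
  unfolding knorm_def validf_def by simp

lemma validf_mult_summable:
  assumes "\<nu> summable_on UNIV" "validf f"
  shows "(\<lambda>x. f x * \<nu> x) summable_on UNIV"
proof -
  have "(\<lambda>x. norm (\<nu> x)) summable_on UNIV" using assms(1) summable_on_iff_abs_summable_on_real by blast
  then have "(\<lambda>x. norm (f x * \<nu> x)) summable_on UNIV"
  proof (rule Infinite_Sum.abs_summable_on_comparison_test)
    fix x
    have "\<bar>f x\<bar> \<le> 1" using assms(2) by (auto simp: validf_def)
    then show "norm (f x * \<nu> x) \<le> norm (\<nu> x)"
      by (auto simp: abs_mult intro: mult_left_le_one_le)
  qed
  then show ?thesis using summable_on_iff_abs_summable_on_real by blast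
qed

lemma knorm_lower:
  assumes "\<nu> summable_on UNIV" "validf f"
  shows "(\<Sum>\<^sub>\<infinity>x. f x * \<nu> x) \<le> knorm \<nu>"
  unfolding knorm_alt
proof (rule cSup_upper)
  show "(\<Sum>\<^sub>\<infinity>x. f x * \<nu> x) \<in> {(\<Sum>\<^sub>\<infinity>x. f x * \<nu> x) | f. validf f}" using assms(2) by blast
  have an: "(\<lambda>x. \<bar>\<nu> x\<bar>) summable_on UNIV"
    using assms(1) summable_on_iff_abs_summable_on_real by auto
  show "bdd_above {(\<Sum>\<^sub>\<infinity>x. f x * \<nu> x) | f. validf f}"
  proof (rule bdd_aboveI[where M="\<Sum>\<^sub>\<infinity>x. \<bar>\<nu> x\<bar>"], clarify)
    fix g assume g: "validf g"
    show "(\<Sum>\<^sub>\<infinity>x. g x * \<nu> x) \<le> (\<Sum>\<^sub>\<infinity>x. \<bar>\<nu> x\<bar>)"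
    proof (rule infsum_mono[OF validf_mult_summable[OF assms(1) g] an])
      fix x
      have "\<bar>g x\<bar> \<le> 1" using g by (auto simp: validf_def)
      then have "\<bar>g x * \<nu> x\<bar> \<le> \<bar>\<nu> x\<bar>" by (auto simp: abs_mult intro: mult_left_le_one_le)
      then show "g x * \<nu> x \<le> \<bar>\<nu> x\<bar>" by linarith
    qed
  qed
qed

lemma knorm_upper:
  assumes "\<And>f. validf f \<Longrightarrow> (\<Sum>\<^sub>\<infinity>x. f x * \<nu> x) \<le> B"
  shows "knorm \<nu> \<le> B"
  unfolding knorm_alt
proof (rule cSup_least)
  have "validf (\<lambda>_. 0)" by (auto simp: validf_def dZ_def)
  then show "{(\<Sum>\<^sub>\<infinity>x. f x * \<nu> x) | f. validf f} \<noteq> {}" by blast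
qed (use assms in auto)



theorem lemma2p5:
  fixes am a0 ap eps :: real and mu0 :: "int \<Rightarrow> real" and R n :: nat and w :: "int list"
  assumes "am \<ge> 0" and "a0 \<ge> 0" and "ap \<ge> 0" and "am + a0 + ap = 1"
    and "is_prob_Z mu0" and "a0 \<noteq> 0"
    and "0 < eps" and "eps < a0 / 2"
    and "int R > max (R_Zbar eps) (int (R_mu0 mu0 eps))"
    and "w \<in> Omega0_ball n (mix am a0 ap mu0) (2 powr (- real R) * eps)"
  shows "N0 R w \<noteq> 0 \<and> knorm (\<lambda>x. ell0 R w x - embZ mu0 x) < 6 * eps / a0"
proof -
  have w: "w \<in> Omega0 n" "ell w \<in> pball (mix am a0 ap mu0) (2 powr (- real R) * eps)"
    using assms(10) by (auto simp: Omega0_ball_def)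
  have len: "length w = n" "n \<ge> 1" using w(1) by (auto simp: Omega0_def)
  define \<nu> where "\<nu> = (\<lambda>x. ell w x - mix am a0 ap mu0 x)"
  have ellp: "is_prob (ell w)" and kn: "knorm \<nu> < 2 powr (- real R) * eps"
    using w(2) by (auto simp: pball_def \<nu>_def)
  have mu0: "\<And>k. mu0 k \<ge> 0" "(mu0 has_sum 1) UNIV" using assms(5) by (auto simp: is_prob_Z_def)
  have mu0s: "mu0 summable_on UNIV" using mu0(2) by (auto simp: summable_on_def)
  define c where "c = 2 powr (- real R)"
  have c: "c > 0" "c \<le> 1" unfolding c_def by (auto intro: p2le1)
  define A where "A = A0 R"
  have finA: "finite A" by (simp add: A_def A0_def)
  define L where "L = (\<lambda>k. ell w (Fin k))"
  have Lf: "L k = real (card {j. j < n \<and> w ! j = k}) / real n" for k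
    by (simp add: L_def ell_def len)
  have Lnn: "L k \<ge> 0" for k by (simp add: Lf)
  have a0le1: "a0 \<le> 1" using assms(1-4) by linarith
  have a0pos: "a0 > 0" using assms(2,6) by auto

  have ells: "ell w summable_on UNIV" using ellp by (auto simp: is_prob_def summable_on_def)
  have mixs: "mix am a0 ap mu0 summable_on UNIV"
  proof -
    have "(\<lambda>k. a0 * mu0 k) summable_on UNIV" using mu0s by (rule summable_on_cmult_right)
    then have "mix am a0 ap mu0 summable_on range Fin"
      by (subst summable_on_reindex) (auto simp: inj_on_def o_def mix_def)
    moreover have "mix am a0 ap mu0 summable_on {NegInf, PosInf}" by simp
    moreover have "range Fin \<inter> {NegInf, PosInf} = {}" by auto
    ultimately have "mix am a0 ap mu0 summable_on (range Fin \<union> {NegInf, PosInf})"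
      by (rule summable_on_Un_disjoint)
    moreover have "range Fin \<union> {NegInf, PosInf} = UNIV"
      by (auto, case_tac x, auto)
    ultimately show ?thesis by simp
  qed
  have nus: "\<nu> summable_on UNIV"
  proof -
    have "(\<lambda>x. ell w x + - mix am a0 ap mu0 x) summable_on UNIV"
      using summable_on_add[OF ells summable_on_uminus[THEN iffD2, OF mixs]] .
    then show ?thesis by (simp add: \<nu>_def)
  qed

  define e1 where "e1 = knorm \<nu> / c"
  have e1: "e1 < eps" using kn c by (simp add: e1_def c_def pos_divide_less_eq mult.commute)
  have close: "\<bar>\<Sum>i\<in>S. (L i - a0 * mu0 i)\<bar> \<le> e1" if SA: "S \<subseteq> A" for S
  proof -
    have one: "d * (\<Sum>i\<in>S. (L i - a0 * mu0 i)) \<le> knorm \<nu>" if d: "\<bar>d\<bar> = c" for d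
    proof -
      define f where "f = (\<lambda>x. if x \<in> Fin ` S then d else 0)"
      have vf: "validf f"
        unfolding validf_def
      proof (intro conjI allI)
        fix x show "\<bar>f x\<bar> \<le> 1" using d c by (auto simp: f_def)
      next
        fix h k
        have gp: "\<bar>d\<bar> \<le> dZ (Fin i) y" if "i \<in> S" "y \<noteq> Fin i" for i y
          using gap_dZ[of i R y] that SA d by (auto simp: A_def c_def)
        have sym: "dZ h k = dZ k h" by (simp add: dZ_def abs_minus_commute)
        have nn: "dZ h k \<ge> 0" by (simp add: dZ_def)
        show "\<bar>f h - f k\<bar> \<le> dZ h k"
        proof (cases "h \<in> Fin ` S"; cases "k \<in> Fin ` S")
          assume "h \<in> Fin ` S" "k \<notin> Fin ` S"
          then obtain i where "i \<in> S" "h = Fin i" "k \<noteq> Fin i" by auto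
          then show ?thesis using gp[of i k] \<open>k \<notin> Fin ` S\<close> by (auto simp: f_def)
        next
          assume "h \<notin> Fin ` S" "k \<in> Fin ` S"
          then obtain i where "i \<in> S" "k = Fin i" "h \<noteq> Fin i" by auto
          then show ?thesis using gp[of i h] \<open>h \<notin> Fin ` S\<close> sym by (auto simp: f_def)
        qed (use nn in \<open>auto simp: f_def\<close>)
      qed
      have finS: "finite S" using SA finA finite_subset by blast
      have "(\<Sum>\<^sub>\<infinity>x. f x * \<nu> x) = (\<Sum>\<^sub>\<infinity>x\<in>Fin ` S. f x * \<nu> x)"
        by (rule infsum_cong_neutral) (auto simp: f_def)
      also have "\<dots> = (\<Sum>x\<in>Fin ` S. f x * \<nu> x)" using finS by simp
      also have "\<dots> = (\<Sum>i\<in>S. d * (L i - a0 * mu0 i))"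
        by (subst sum.reindex) (auto simp: inj_on_def f_def \<nu>_def L_def mix_def)
      also have "\<dots> = d * (\<Sum>i\<in>S. (L i - a0 * mu0 i))" by (simp add: sum_distrib_left)
      finally show ?thesis using knorm_lower[OF nus vf] by simp
    qed
    have "c * (\<Sum>i\<in>S. (L i - a0 * mu0 i)) \<le> knorm \<nu>" using one[of c] c by simp
    moreover have "- c * (\<Sum>i\<in>S. (L i - a0 * mu0 i)) \<le> knorm \<nu>" using one[of "-c"] c by simp
    ultimately have "c * \<bar>\<Sum>i\<in>S. (L i - a0 * mu0 i)\<bar> \<le> knorm \<nu>" by (simp add: abs_if)
    then show ?thesis using c by (simp add: e1_def pos_le_divide_eq mult.commute)
  qed
  have e1nn: "e1 \<ge> 0" using close[of "{}"] by simp
  have closeS: "\<bar>sum L S - a0 * sum mu0 S\<bar> \<le> e1" if "S \<subseteq> A" for S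
    using close[OF that] by (simp add: sum_subtractf sum_distrib_left)

  define m where "m = sum mu0 A"
  have m_le: "m \<le> 1" unfolding m_def
    by (rule finite_sum_le_has_sum[OF mu0(2) finA]) (use mu0 in auto)
  have exR: "\<exists>R'. (\<Sum>k\<in>A0 R'. mu0 k) > 1 - eps"
  proof -
    have "(sum mu0 \<longlongrightarrow> 1) (finite_subsets_at_top UNIV)" using mu0(2) by (simp add: has_sum_def)
    then have "eventually (\<lambda>F. sum mu0 F > 1 - eps) (finite_subsets_at_top UNIV)"
      using assms(7) by (intro order_tendstoD(1)) auto
    then obtain X where X: "finite X" "\<And>Y. finite Y \<Longrightarrow> X \<subseteq> Y \<Longrightarrow> sum mu0 Y > 1 - eps"
      unfolding eventually_finite_subsets_at_top by auto
    define M where "M = Max (insert 0 (abs ` X))"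
    have M: "M \<ge> 0" "\<And>x. x \<in> X \<Longrightarrow> \<bar>x\<bar> \<le> M" using X(1) by (auto simp: M_def)
    define R' where "R' = nat M + 1"
    have "X \<subseteq> A0 R'" using M by (force simp: A0_def R'_def)
    then show ?thesis using X(2)[of "A0 R'"] by (auto simp: A0_def)
  qed
  have m_gt: "m > 1 - eps"
  proof -
    have "(\<Sum>k\<in>A0 (R_mu0 mu0 eps). mu0 k) > 1 - eps" unfolding R_mu0_def
      using exR by (rule LeastI_ex)
    moreover have "R_mu0 mu0 eps \<le> R" using assms(9) by auto
    then have "A0 (R_mu0 mu0 eps) \<subseteq> A" by (auto simp: A0_def A_def)
    then have "(\<Sum>k\<in>A0 (R_mu0 mu0 eps). mu0 k) \<le> m" unfolding m_def
      using finA mu0(1) by (intro sum_mono2) auto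
    ultimately show ?thesis by linarith
  qed

  define a where "a = sum L A"
  have a_close: "\<bar>a - a0 * m\<bar> \<le> e1" using closeS[of A] by (simp add: a_def m_def)
  have "a0 * m \<ge> a0 * (1 - eps)" using m_gt assms(2) by (intro mult_left_mono) auto
  moreover have "a0 * eps \<le> eps" using a0le1 assms(2,7) by (intro mult_left_le_one_le) auto
  ultimately have apos: "a > 0" using a_close e1 assms(8) by (simp add: algebra_simps)

  have cardA: "card {j. j < n \<and> w ! j \<in> A} = (\<Sum>k\<in>A. card {j. j < n \<and> w ! j = k})"
  proof -
    have "{j. j < n \<and> w ! j \<in> A} = (\<Union>k\<in>A. {j. j < n \<and> w ! j = k})" by auto
    moreover have "card (\<Union>k\<in>A. {j. j < n \<and> w ! j = k}) = (\<Sum>k\<in>A. card {j. j < n \<and> w ! j = k})"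
      using finA by (intro card_UN_disjoint) auto
    ultimately show ?thesis by simp
  qed
  have aN: "a = real (N0 R w) / real n"
  proof -
    have "a = (\<Sum>k\<in>A. real (card {j. j < n \<and> w ! j = k})) / real n"
      by (simp add: a_def Lf sum_divide_distrib)
    also have "\<dots> = real (N0 R w) / real n"
      by (simp add: N0_def len A_def[symmetric] cardA)
    finally show ?thesis .
  qed
  have N0nz: "N0 R w \<noteq> 0"
  proof
    assume "N0 R w = 0"
    then have "a = 0" using aN by simp
    then show False using apos by simp
  qed
  have ell0A: "ell0 R w (Fin k) = L k / a" if "k \<in> A" for k
    using that N0nz len by (simp add: ell0_def A_def[symmetric] aN Lf field_simps)
  have ell0out: "ell0 R w x = 0" if "x \<notin> Fin ` A" for x
    using that by (cases x) (auto simp: ell0_def A_def)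

  define neg where "neg = (\<Sum>k\<in>A. max 0 (mu0 k - L k / a))"
  have neg_le: "neg \<le> e1 / a0"
  proof -
    define S where "S = {k\<in>A. 0 < mu0 k - L k / a}"
    have SA: "S \<subseteq> A" by (auto simp: S_def)
    have "neg = (\<Sum>k\<in>A. if 0 < mu0 k - L k / a then mu0 k - L k / a else 0)"
      unfolding neg_def by (intro sum.cong) auto
    also have "\<dots> = (\<Sum>k\<in>S. mu0 k - L k / a)"
      unfolding S_def using finA by (simp add: sum.inter_filter)
    finally have negS: "neg = sum mu0 S - sum L S / a"
      by (simp add: sum_subtractf sum_divide_distrib)
    have muS: "sum mu0 S \<le> m" unfolding m_def using SA finA mu0(1) by (intro sum_mono2) auto
    have muSnn: "sum mu0 S \<ge> 0" using mu0(1) by (simp add: sum_nonneg)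
    have LS: "sum L S \<ge> 0" using Lnn by (simp add: sum_nonneg)
    have cS: "\<bar>sum L S - a0 * sum mu0 S\<bar> \<le> e1" using closeS[OF SA] .
    have cAS: "\<bar>sum L (A - S) - a0 * sum mu0 (A - S)\<bar> \<le> e1" using closeS[of "A - S"] by auto
    have d1: "sum L (A - S) = a - sum L S" using finA SA by (simp add: a_def sum_diff)
    have d2: "sum mu0 (A - S) = m - sum mu0 S" using finA SA by (simp add: m_def sum_diff)
    show ?thesis
    proof (cases "a \<ge> a0")
      case True
      have an: "a * neg = a * sum mu0 S - sum L S" using apos by (simp add: negS field_simps)
      have "sum mu0 S * (a - a0) \<le> a - a0"
        using muS m_le muSnn True by (intro mult_left_le_one_le) auto
      moreover have "a0 * m \<le> a0" using m_le assms(2) by (intro mult_left_le) auto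
      ultimately have "a * neg \<le> e1" using cAS d1 d2 an by (simp add: algebra_simps)
      then have "neg \<le> e1 / a" using apos by (simp add: pos_le_divide_eq mult.commute)
      also have "\<dots> \<le> e1 / a0" using True a0pos e1nn by (intro divide_left_mono) auto
      finally show ?thesis .
    next
      case False
      have "sum L S / a0 \<le> sum L S / a" using False apos LS by (intro divide_left_mono) auto
      then have "neg \<le> sum mu0 S - sum L S / a0" using negS by linarith
      also have "\<dots> = (a0 * sum mu0 S - sum L S) / a0" using a0pos by (simp add: field_simps)
      also have "\<dots> \<le> e1 / a0" using cS a0pos by (intro divide_right_mono) auto
      finally show ?thesis .
    qed
  qed

  define B where "B = 2 * (1 - m) + 2 * (e1 / a0)"
  have kB: "knorm (\<lambda>x. ell0 R w x - embZ mu0 x) \<le> B"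
  proof (rule knorm_upper)
    fix g assume g: "validf g"
    define G where "G = (\<lambda>k. g (Fin k))"
    have G1: "\<bar>G k\<bar> \<le> 1" for k using g by (auto simp: validf_def G_def)
    have Gs: "(\<lambda>k. G k * mu0 k) summable_on UNIV"
    proof -
      have "(\<lambda>k. norm (mu0 k)) summable_on UNIV"
        using mu0s summable_on_iff_abs_summable_on_real by blast
      then have "(\<lambda>k. norm (G k * mu0 k)) summable_on UNIV"
      proof (rule Infinite_Sum.abs_summable_on_comparison_test)
        fix k show "norm (G k * mu0 k) \<le> norm (mu0 k)"
          using G1[of k] by (auto simp: abs_mult intro: mult_left_le_one_le)
      qed
      then show ?thesis using summable_on_iff_abs_summable_on_real by blast
    qed
    have h2: "((\<lambda>x. g x * embZ mu0 x) has_sum (\<Sum>\<^sub>\<infinity>k. G k * mu0 k)) UNIV"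
    proof -
      have "(\<lambda>x. g x * embZ mu0 x) = (\<lambda>x. case x of Fin k \<Rightarrow> G k * mu0 k | _ \<Rightarrow> 0)"
        by (rule ext, case_tac x) (auto simp: embZ_def G_def)
      then show ?thesis using embZ_has_sum[OF has_sum_infsum[OF Gs]] by simp
    qed
    have h1: "((\<lambda>x. g x * ell0 R w x) has_sum (\<Sum>k\<in>A. G k * (L k / a))) UNIV"
    proof -
      have "((\<lambda>x. g x * ell0 R w x) has_sum (\<Sum>x\<in>Fin ` A. g x * ell0 R w x)) (Fin ` A)"
        using finA by simp
      moreover have "(\<Sum>x\<in>Fin ` A. g x * ell0 R w x) = (\<Sum>k\<in>A. G k * (L k / a))"
        by (subst sum.reindex) (auto simp: inj_on_def G_def ell0A)
      ultimately have "((\<lambda>x. g x * ell0 R w x) has_sum (\<Sum>k\<in>A. G k * (L k / a))) (Fin ` A)"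
        by simp
      then show ?thesis
        by (subst (asm) has_sum_cong_neutral[where T=UNIV and g="\<lambda>x. g x * ell0 R w x"])
           (auto simp: ell0out)
    qed
    have "((\<lambda>x. g x * ell0 R w x + - (g x * embZ mu0 x)) has_sum
            ((\<Sum>k\<in>A. G k * (L k / a)) + - (\<Sum>\<^sub>\<infinity>k. G k * mu0 k))) UNIV"
      by (rule has_sum_add[OF h1 has_sum_uminusI[OF h2]])
    then have eq: "(\<Sum>\<^sub>\<infinity>x. g x * (ell0 R w x - embZ mu0 x))
        = (\<Sum>k\<in>A. G k * (L k / a)) - (\<Sum>\<^sub>\<infinity>k. G k * mu0 k)"
      by (simp add: right_diff_distrib infsumI)
    have tail: "(\<Sum>\<^sub>\<infinity>k. G k * mu0 k) \<ge> (\<Sum>k\<in>A. G k * mu0 k) - (1 - m)"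
    proof -
      have s2: "(\<lambda>k. G k * mu0 k + mu0 k) summable_on UNIV" using summable_on_add[OF Gs mu0s] .
      have "(\<Sum>k\<in>A. G k * mu0 k + mu0 k) \<le> (\<Sum>\<^sub>\<infinity>k. G k * mu0 k + mu0 k)"
      proof (rule finite_sum_le_infsum[OF s2 finA])
        fix k
        have "0 \<le> (G k + 1) * mu0 k" using G1[of k] mu0(1)[of k] by (intro mult_nonneg_nonneg) auto
        then show "0 \<le> G k * mu0 k + mu0 k" by (simp add: algebra_simps)
      qed auto
      also have "\<dots> = (\<Sum>\<^sub>\<infinity>k. G k * mu0 k) + 1"
        using infsum_add[OF Gs mu0s] infsumI[OF mu0(2)] by simp
      finally show ?thesis by (simp add: sum.distrib m_def)
    qed
    have st: "(\<Sum>k\<in>A. G k * (L k / a)) - (\<Sum>k\<in>A. G k * mu0 k) \<le> (\<Sum>k\<in>A. \<bar>L k / a - mu0 k\<bar>)"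
    proof -
      have "(\<Sum>k\<in>A. G k * (L k / a)) - (\<Sum>k\<in>A. G k * mu0 k) = (\<Sum>k\<in>A. G k * (L k / a - mu0 k))"
        by (simp add: sum_subtractf right_diff_distrib)
      also have "\<dots> \<le> (\<Sum>k\<in>A. \<bar>L k / a - mu0 k\<bar>)"
      proof (rule sum_mono)
        fix k
        have "\<bar>G k * (L k / a - mu0 k)\<bar> \<le> \<bar>L k / a - mu0 k\<bar>"
          using G1[of k] by (auto simp: abs_mult intro: mult_left_le_one_le)
        then show "G k * (L k / a - mu0 k) \<le> \<bar>L k / a - mu0 k\<bar>" by linarith
      qed
      finally show ?thesis .
    qed
    have sabs: "(\<Sum>k\<in>A. \<bar>L k / a - mu0 k\<bar>) = (1 - m) + 2 * neg"
    proof -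
      have "(\<Sum>k\<in>A. \<bar>L k / a - mu0 k\<bar>) = (\<Sum>k\<in>A. (L k / a - mu0 k) + 2 * max 0 (mu0 k - L k / a))"
        by (intro sum.cong) (auto simp: abs_if max_def)
      also have "\<dots> = sum L A / a - m + 2 * neg"
        by (simp add: sum.distrib sum_subtractf sum_divide_distrib sum_distrib_left neg_def m_def)
      also have "sum L A / a = 1" using apos by (simp add: a_def)
      finally show ?thesis by simp
    qed
    show "(\<Sum>\<^sub>\<infinity>x. g x * (ell0 R w x - embZ mu0 x)) \<le> B"
      unfolding B_def eq using tail st sabs neg_le by (smt (verit))
  qed
  have "B < 6 * eps / a0"
  proof -
    define q where "q = eps / a0"
    define r where "r = e1 / a0"
    have "r < q" using e1 a0pos unfolding q_def r_def by (intro divide_strict_right_mono)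
    moreover have "eps \<le> q" using a0pos a0le1 assms(7) by (simp add: q_def le_divide_eq mult_left_le_one_le)
    moreover have "q > 0" using a0pos assms(7) by (simp add: q_def)
    ultimately have "2 * (1 - m) + 2 * r < 6 * q" using m_gt by (smt (verit))
    moreover have "6 * eps / a0 = 6 * q" by (simp add: q_def)
    ultimately show ?thesis unfolding B_def r_def by simp
  qed
  then show ?thesis using kB N0nz by linarith
qed

end
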